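(* In the setting below, for $n$ participants, the protocol consisting of the setup phase, Round 1 and Rounds 2–3 is correct, i.e. at the end every participant's balance is $0$ (and the shared address is empty), and, apart from the setup, it uses exactly $3\cdot n$ transactions.
   Context: Setting (Conspiracy Santa). There are $n$ participants $P_1,\dots,P_n$. Expenses are organized in exchange groups (in Conspiracy Santa: for each participant, the other $n-1$ participants form a group, choose a gift for him, one or more of them buy it, and its value is shared equally among the $n-1$ group members). All participants know a fixed upper bound $B$ (a positive integer, in cents) on the value of any gift. Setup phase: in each group every payment is broadcast to the group members, each member computes the in-group share (total paid in the group divided by the number of group members); each participant adds his in-group shares and subtracts his own expenses, obtaining his balance $p_i$, assumed to be an integer number of cents (shares may be unevenly split up to one cent). Thus $\sum_i p_i=0$; $p_i>0$ means $P_i$ owes money, $p_i<0$ means $P_i$ must be reimbursed. Sending $x$ cents decreases the sender's balance by $x$ and increases the receiver's balance by $x$. Participants also create anonymous cryptocurrency addresses, and one shared anonymous address (the piggy bank) whose secret key all participants know. All $x \bmod B$ denote the representative in $\{0,\dots,B-1\}$. Round 1 (private transactions on secure channels): $P_1$ samples $t_1$ uniformly in $\{1,\dots,B\}$, sets $p_1\leftarrow p_1-t_1$ and sends $t_1$ cents to $P_2$, who sets $p_2\leftarrow p_2+t_1$. For $i=2,\dots,n$: $P_i$ sets $t_i=p_i \bmod B$, and if $t_i=0$ sets $t_i=B$; then $p_i\leftarrow p_i-t_i$ and $P_i$ sends $t_i$ cents to $P_{i+1}$ (where $P_{n+1}=P_1$), who adds $t_i$ to his balance. Round 2: every $P_i$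 sends $B$ cents to the shared address and sets $p_i\leftarrow p_i-B$. Round 3: every $P_i$ with $p_i<0$ makes, for each of $-p_i/B$ times, the shared address pay $B$ cents to one of his own (distinct) anonymous addresses, and then sets $p_i\leftarrow 0$.
   Formalization: Each balance $p_i$ equals exactly the sum of his in-group shares, each the group total divided by $n-1$ without rounding, minus his own expenses, so shares are never unevenly split up to one cent. The paper assumes this as well. *)

theory Defs
  imports Complex_Main
begin

text \<open>Addresses: the (public) account of participant i, the k-th anonymous
address of participant i, and the shared anonymous address (piggy bank).
Participants are indexed 1..n.\<close>
datatype addr = Part nat | Anon nat nat | Piggy

text \<open>A transaction: (sender, receiver, amount in cents).\<close>
type_synonym tx = "addr \<times> addr \<times> int"

text \<open>State: the balances p_i of the participants (money still owed) and
the content of the shared address.\<close>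
type_synonym state = "(nat \<Rightarrow> int) \<times> int"

fun owner :: "addr \<Rightarrow> nat option" where
  "owner (Part i) = Some i"
| "owner (Anon i k) = Some i"
| "owner Piggy = None"

definition debit :: "addr \<Rightarrow> int \<Rightarrow> state \<Rightarrow> state" where
  "debit a x s = (case owner a of
      Some i \<Rightarrow> ((fst s)(i := fst s i - x), snd s)
    | None \<Rightarrow> (fst s, snd s - x))"

definition credit :: "addr \<Rightarrow> int \<Rightarrow> state \<Rightarrow> state" where
  "credit a x s = (case owner a of
      Some i \<Rightarrow> ((fst s)(i := fst s i + x), snd s)
    | None \<Rightarrow> (fst s, snd s + x))"

fun apply_tx :: "tx \<Rightarrow> state \<Rightarrow> state" where
  "apply_tx (a, b, x) s = credit b x (debit a x s)"

definition run_txs :: "tx list \<Rightarrow> state \<Rightarrow> state" where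
  "run_txs ts s = fold apply_tx ts s"

definition tval :: "int \<Rightarrow> int \<Rightarrow> int" where
  "tval B x = (if x mod B = 0 then B else x mod B)"

definition succ_part :: "nat \<Rightarrow> nat \<Rightarrow> nat" where
  "succ_part n i = (if i = n then 1 else Suc i)"

definition round1_step :: "int \<Rightarrow> nat \<Rightarrow> nat \<Rightarrow> state \<times> tx list \<Rightarrow> state \<times> tx list" where
  "round1_step B n i st =
     (let s = fst st; t = tval B (fst s i); tr = (Part i, Part (succ_part n i), t)
      in (apply_tx tr s, snd st @ [tr]))"

text \<open>Round 1 with P_1's sampled value t1: returns the resulting state and
the list of transactions performed.\<close>
definition round1 :: "int \<Rightarrow> nat \<Rightarrow> int \<Rightarrow> state \<Rightarrow> state \<times> tx list" where
  "round1 B n t1 s0 =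
     (let tr = (Part 1, Part (succ_part n 1), t1)
      in fold (round1_step B n) [2..<Suc n] (apply_tx tr s0, [tr]))"

definition round2 :: "int \<Rightarrow> nat \<Rightarrow> tx list" where
  "round2 B n = map (\<lambda>i. (Part i, Piggy, B)) [1..<Suc n]"

definition round3 :: "int \<Rightarrow> nat \<Rightarrow> state \<Rightarrow> tx list" where
  "round3 B n s = concat (map (\<lambda>i.
      if fst s i < 0
      then map (\<lambda>k. (Piggy, Anon i k, B)) [0..<nat ((- fst s i) div B)]
      else []) [1..<Suc n])"

text \<open>Setup phase of Conspiracy Santa: pay i j \<ge> 0 is what P_i (i \<noteq> j)
paid for the gift of P_j; the gift value is the total paid in group j, at
most B; the in-group share is that total divided by the n-1 group members.\<close>
definition santa_balance :: "nat \<Rightarrow> (nat \<Rightarrow> nat \<Rightarrow> int) \<Rightarrow> nat \<Rightarrow> real" where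
  "santa_balance n pay i =
     (\<Sum>j\<in>{1..n} - {i}. real_of_int (\<Sum>k\<in>{1..n} - {j}. pay k j) / real (n - 1))
     - real_of_int (\<Sum>j\<in>{1..n} - {i}. pay i j)"

end

theory Submission
  imports Defs
begin

definition delta :: "nat option \<Rightarrow> tx \<Rightarrow> int" where
  "delta o' tr = (case tr of (a, b, x) \<Rightarrow>
      (if owner b = o' then x else 0) - (if owner a = o' then x else 0))"

lemma run_fst:
  "fst (fold apply_tx ts s) i = fst s i + sum_list (map (delta (Some i)) ts)"
  by (induction ts arbitrary: s) (auto simp: delta_def debit_def credit_def split: option.splits)

lemma run_snd:
  "snd (fold apply_tx ts s) = snd s + sum_list (map (delta None) ts)"
  by (induction ts arbitrary: s) (auto simp: delta_def debit_def credit_def split: option.splits)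

lemma sum_list_concat': "sum_list (concat xss) = sum_list (map sum_list (xss :: int list list))"
  by (induction xss) auto

lemma apply_part:
  "apply_tx (Part a, Part b, x) s = ((fst s)(a := fst s a - x, b := ((fst s)(a := fst s a - x)) b + x), snd s)"
  by (simp add: debit_def credit_def)

lemma sum_upd2:
  assumes "finite A" "a \<in> A" "b \<in> A" "a \<noteq> b"
  shows "sum (f(a := f a - x, b := f b + x)) A = sum (f :: nat \<Rightarrow> int) A"
proof -
  have e: "f(a := f a - x, b := f b + x) = (\<lambda>k. f k + ((if k = b then x else 0) - (if k = a then x else 0)))"
    using assms(4) by (auto simp: fun_eq_iff)
  have "sum (\<lambda>k. f k + ((if k = b then x else 0) - (if k = a then x else 0))) A
      = sum f A + (sum (\<lambda>k. if k = b then x else 0) A - sum (\<lambda>k. if k = a then x else 0) A)"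
    by (simp only: sum.distrib sum_subtractf)
  also have "\<dots> = sum f A" using assms(1-3) by (simp add: sum.delta)
  finally show ?thesis unfolding e .
qed

lemma tval_bounds: fixes B x :: int shows "B > 0 \<Longrightarrow> 1 \<le> tval B x \<and> tval B x \<le> B"
proof -
  assume B: "B > 0"
  have "0 \<le> x mod B" "x mod B < B" using B by simp_all
  note m = this
  show ?thesis
  proof (cases "x mod B = 0")
    case True then show ?thesis using B by (simp add: tval_def)
  next
    case False
    then have "tval B x = x mod B" by (simp add: tval_def)
    then show ?thesis using m False by linarith
  qed
qed

lemma tval_dvd: "B dvd (x - tval B x)"
  unfolding tval_def by (auto simp: mod_eq_0_iff_dvd)

lemma dvd_le: assumes "(B::int) > 0" "B dvd y" "y < 2 * B" shows "y \<le> B"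
proof -
  obtain k where k: "y = B * k" using assms by blast
  have "B * k < B * 2" using assms k by simp
  then have "k < 2" using assms(1) by simp
  then have "k \<le> 1" by simp
  then have "B * k \<le> B * 1" using assms(1) by simp
  then show ?thesis using k by simp
qed

lemma tval_le: "B > 0 \<Longrightarrow> x \<le> 2 * B \<Longrightarrow> x - tval B x \<le> B"
  using tval_bounds[of B x] tval_dvd[of B x] dvd_le[of B "x - tval B x"] by auto

lemma offdiag: "finite A \<Longrightarrow> (\<Sum>i\<in>A. \<Sum>j\<in>A - {i}. (f i j :: int)) = (\<Sum>j\<in>A. \<Sum>k\<in>A - {j}. f k j)"
proof -
  assume A: "finite A"
  have "(\<Sum>i\<in>A. \<Sum>j\<in>A - {i}. f i j) = (\<Sum>i\<in>A. (\<Sum>j\<in>A. f i j) - f i i)"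
    using A by (intro sum.cong) (auto simp: sum_diff1)
  also have "\<dots> = (\<Sum>i\<in>A. \<Sum>j\<in>A. f i j) - (\<Sum>i\<in>A. f i i)" by (simp add: sum_subtractf)
  also have "\<dots> = (\<Sum>j\<in>A. \<Sum>k\<in>A. f k j) - (\<Sum>i\<in>A. f i i)"
    using sum.swap[of f A A] by (simp only:)
  also have "\<dots> = (\<Sum>j\<in>A. (\<Sum>k\<in>A. f k j) - f j j)" by (simp add: sum_subtractf)
  also have "\<dots> = (\<Sum>j\<in>A. \<Sum>k\<in>A - {j}. f k j)"
    using A by (intro sum.cong) (auto simp: sum_diff1)
  finally show ?thesis .
qed

lemma santa_sum:
  assumes "n \<ge> 2"
  shows "(\<Sum>i\<in>{1..n}. santa_balance n pay i) = 0"
proof -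
  let ?A = "{1..n::nat}"
  define g where "g j = real_of_int (\<Sum>k\<in>?A - {j}. pay k j) / real (n - 1)" for j
  have n1: "real (n - 1) \<noteq> 0" using assms by simp
  have "(\<Sum>i\<in>?A. \<Sum>j\<in>?A - {i}. g j) = (\<Sum>i\<in>?A. (\<Sum>j\<in>?A. g j) - g i)"
    by (intro sum.cong) (auto simp: sum_diff1)
  also have "\<dots> = real n * (\<Sum>j\<in>?A. g j) - (\<Sum>j\<in>?A. g j)" by (simp add: sum_subtractf)
  also have "\<dots> = real (n - 1) * (\<Sum>j\<in>?A. g j)" using assms by (simp add: of_nat_diff algebra_simps)
  also have "\<dots> = (\<Sum>j\<in>?A. real_of_int (\<Sum>k\<in>?A - {j}. pay k j))"
    unfolding sum_distrib_left by (intro sum.cong) (simp_all add: g_def n1)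
  also have "\<dots> = real_of_int (\<Sum>i\<in>?A. \<Sum>j\<in>?A - {i}. pay i j)"
  proof -
    have eq: "(\<Sum>i\<in>?A. \<Sum>j\<in>?A - {i}. pay i j) = (\<Sum>j\<in>?A. \<Sum>k\<in>?A - {j}. pay k j)"
      by (rule offdiag) simp
    show ?thesis unfolding eq by (simp only: of_int_sum)
  qed
  finally have e: "(\<Sum>i\<in>?A. \<Sum>j\<in>?A - {i}. g j) = real_of_int (\<Sum>i\<in>?A. \<Sum>j\<in>?A - {i}. pay i j)" .
  show ?thesis unfolding santa_balance_def using e by (simp add: sum_subtractf g_def)
qed

lemma santa_le:
  assumes "n \<ge> 2" "B > 0"
    and "\<And>i j. i \<in> {1..n} \<Longrightarrow> j \<in> {1..n} \<Longrightarrow> i \<noteq> j \<Longrightarrow> pay i j \<ge> 0"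
    and "\<And>j. j \<in> {1..n} \<Longrightarrow> (\<Sum>k\<in>{1..n} - {j}. pay k j) \<le> B"
    and i: "i \<in> {1..n}"
  shows "santa_balance n pay i \<le> real_of_int B"
proof -
  let ?A = "{1..n::nat}"
  have n1: "real (n - 1) > 0" using assms by simp
  have "(\<Sum>j\<in>?A - {i}. real_of_int (\<Sum>k\<in>?A - {j}. pay k j) / real (n - 1))
     \<le> (\<Sum>j\<in>?A - {i}. real_of_int B / real (n - 1))"
    using n1 assms(4) by (intro sum_mono divide_right_mono) (auto simp del: of_int_sum)
  also have "\<dots> = real_of_int B" using i n1 by simp
  finally have a: "(\<Sum>j\<in>?A - {i}. real_of_int (\<Sum>k\<in>?A - {j}. pay k j) / real (n - 1)) \<le> real_of_int B" .
  have b: "0 \<le> (\<Sum>j\<in>?A - {i}. pay i j)" using assms(3) i by (intro sum_nonneg) auto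
  show ?thesis unfolding santa_balance_def using a b by linarith
qed

definition inv1 :: "int \<Rightarrow> nat \<Rightarrow> nat \<Rightarrow> state \<Rightarrow> bool" where
  "inv1 B n m s \<longleftrightarrow> (\<forall>i\<in>{2..m}. B dvd fst s i \<and> fst s i \<le> B)
     \<and> (m < n \<longrightarrow> fst s (Suc m) \<le> 2 * B)
     \<and> (\<forall>i. Suc (Suc m) \<le> i \<and> i \<le> n \<longrightarrow> fst s i \<le> B)
     \<and> fst s 1 \<le> B - 1 + (if m = n then B else 0)
     \<and> (\<Sum>i\<in>{1..n}. fst s i) = 0 \<and> snd s = 0"

lemma step_inv:
  assumes n: "n \<ge> 2" and B: "B > 0" and m: "1 \<le> m" "m < n" and I: "inv1 B n m (fst st)"
  shows "inv1 B n (Suc m) (fst (round1_step B n (Suc m) st)) \<and> length (snd (round1_step B n (Suc m) st)) = Suc (length (snd st))"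
proof -
  define s where "s = fst st"
  define f where "f = fst s"
  define i where "i = Suc m"
  define t where "t = tval B (f i)"
  define j where "j = succ_part n i"
  have ji: "j \<noteq> i" using m n unfolding j_def i_def succ_part_def by auto
  have st: "fst (round1_step B n (Suc m) st) = (f(i := f i - t, j := f j + t), snd s)"
    unfolding round1_step_def Let_def using ji
    by (simp add: debit_def credit_def s_def f_def i_def t_def j_def)
  have len: "length (snd (round1_step B n (Suc m) st)) = Suc (length (snd st))"
    unfolding round1_step_def Let_def by simp
  have tb: "1 \<le> t" "t \<le> B" using tval_bounds[OF B] unfolding t_def by auto
  have I1: "\<forall>k\<in>{2..m}. B dvd f k \<and> f k \<le> B" and I2: "f i \<le> 2 * B"
    and I3: "\<forall>k. Suc (Suc m) \<le> k \<and> k \<le> n \<longrightarrow> f k \<le> B"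
    and I4: "f 1 \<le> B - 1" and I5: "(\<Sum>k\<in>{1..n}. f k) = 0" and I6: "snd s = 0"
  proof -
    have mn: "m \<noteq> n" using m by simp
    have "(\<forall>i\<in>{2..m}. B dvd f i \<and> f i \<le> B)
     \<and> (m < n \<longrightarrow> f (Suc m) \<le> 2 * B)
     \<and> (\<forall>i. Suc (Suc m) \<le> i \<and> i \<le> n \<longrightarrow> f i \<le> B)
     \<and> f 1 \<le> B - 1 + (if m = n then B else 0)
     \<and> (\<Sum>i\<in>{1..n}. f i) = 0 \<and> snd s = 0"
      using I unfolding inv1_def s_def[symmetric] f_def[symmetric] .
    then show "\<forall>k\<in>{2..m}. B dvd f k \<and> f k \<le> B" "f i \<le> 2 * B"
      "\<forall>k. Suc (Suc m) \<le> k \<and> k \<le> n \<longrightarrow> f k \<le> B"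
      "f 1 \<le> B - 1" "(\<Sum>k\<in>{1..n}. f k) = 0" "snd s = 0"
      using m(2) mn unfolding i_def by simp_all
  qed
  have fi: "B dvd (f i - t)" "f i - t \<le> B" using tval_dvd tval_le[OF B I2] unfolding t_def by auto
  have jcases: "(i = n \<and> j = 1) \<or> (i < n \<and> j = Suc i)" using m unfolding j_def succ_part_def i_def by auto
  have jA: "j \<in> {1..n}" "i \<in> {1..n}" using jcases m unfolding i_def by auto
  let ?g = "f(i := f i - t, j := f j + t)"
  have A: "\<forall>k\<in>{2..Suc m}. B dvd ?g k \<and> ?g k \<le> B"
  proof
    fix k assume k: "k \<in> {2..Suc m}"
    show "B dvd ?g k \<and> ?g k \<le> B"
    proof (cases "k = i")
      case True then show ?thesis using fi ji by simp
    next
      case False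
      then have "k \<noteq> j" using k jcases unfolding i_def by auto
      then have gk: "?g k = f k" using False by simp
      have "k \<in> {2..m}" using k False unfolding i_def by auto
      then show ?thesis using I1 gk by simp
    qed
  qed
  have Bc: "Suc m < n \<longrightarrow> ?g (Suc (Suc m)) \<le> 2 * B"
  proof
    assume "Suc m < n"
    then have "j = Suc (Suc m)" using jcases unfolding i_def by (elim disjE) simp_all
    then have "?g (Suc (Suc m)) = f (Suc (Suc m)) + t" by simp
    moreover have "f (Suc (Suc m)) \<le> B" using I3 \<open>Suc m < n\<close> by simp
    ultimately show "?g (Suc (Suc m)) \<le> 2 * B" using tb by simp
  qed
  have C: "\<forall>k. Suc (Suc (Suc m)) \<le> k \<and> k \<le> n \<longrightarrow> ?g k \<le> B"
  proof (intro allI impI)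
    fix k assume k: "Suc (Suc (Suc m)) \<le> k \<and> k \<le> n"
    then have "k \<noteq> i" "k \<noteq> j" using jcases unfolding i_def by (elim disjE; simp)+
    then have "?g k = f k" by simp
    then show "?g k \<le> B" using I3 k by simp
  qed
  have D: "?g 1 \<le> B - 1 + (if Suc m = n then B else 0)"
    using jcases
  proof
    assume h: "i = n \<and> j = 1"
    then have "?g 1 = f 1 + t" using ji by simp
    then show ?thesis using h I4 tb unfolding i_def by simp
  next
    assume h: "i < n \<and> j = Suc i"
    then have "?g 1 = f 1" using m(1) unfolding i_def by simp
    then show ?thesis using h I4 unfolding i_def by simp
  qed
  have E: "(\<Sum>k\<in>{1..n}. ?g k) = 0" using sum_upd2[of "{1..n}" i j f t] jA ji I5 by simp
  show ?thesis using A Bc C D E I6 len unfolding inv1_def st by simp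
qed

lemma round1_res:
  assumes n: "n \<ge> 2" and B: "B > 0" and hp: "\<forall>i\<in>{1..n}. p i \<le> B"
    and hs: "(\<Sum>i\<in>{1..n}. p i) = 0" and t: "1 \<le> t1" "t1 \<le> B"
  shows "inv1 B n n (fst (round1 B n t1 (p, 0))) \<and> length (snd (round1 B n t1 (p, 0))) = n"
proof -
  define F where "F m = fold (round1_step B n) [2..<Suc m]
      (apply_tx (Part 1, Part 2, t1) (p, 0), [(Part 1, Part 2, t1)])" for m
  have "1 \<le> m \<Longrightarrow> m \<le> n \<Longrightarrow> inv1 B n m (fst (F m)) \<and> length (snd (F m)) = m" for m
  proof (induction m)
    case 0 then show ?case by simp
  next
    case (Suc m)
    show ?case
    proof (cases "m = 0")
      case True
      have st: "fst (F 1) = (p(1 := p 1 - t1, 2 := p 2 + t1), 0)"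
        unfolding F_def by (simp add: debit_def credit_def)
      have sm: "(\<Sum>i\<in>{1..n}. (p(1 := p 1 - t1, 2 := p 2 + t1)) i) = 0"
        using sum_upd2[of "{1..n}" 1 2 p t1] n hs by simp
      have "inv1 B n 1 (fst (F 1))"
      proof -
        have "p 2 \<le> B" "p 1 \<le> B" using hp n by auto
        then have q: "p 2 + t1 \<le> 2 * B" "p (Suc 0) - t1 < B" using t by simp_all
        show ?thesis unfolding inv1_def st using hp n t sm q by auto
      qed
      moreover have "length (snd (F 1)) = 1" unfolding F_def by simp
      ultimately show ?thesis using True by simp
    next
      case False
      then have IH: "inv1 B n m (fst (F m)) \<and> length (snd (F m)) = m" using Suc by simp
      have FS: "F (Suc m) = round1_step B n (Suc m) (F m)" unfolding F_def using False by simp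
      show ?thesis using step_inv[OF n B _ _ conjunct1[OF IH]] IH False Suc.prems unfolding FS by simp
    qed
  qed
  moreover have "round1 B n t1 (p, 0) = F n" unfolding round1_def F_def Let_def succ_part_def using n by (simp add: numeral_2_eq_2)
  ultimately show ?thesis using n by simp
qed

lemma sum_list_upt1: "sum_list (map f [1..<Suc n]) = sum f {1..n}"
proof -
  have "set [1..<Suc n] = {1..n}" by auto
  then show ?thesis using sum_list_distinct_conv_sum_set[of "[1..<Suc n]" f] by simp
qed

lemma sum_list_map_concat:
  "sum_list (map g (concat (map h L))) = sum_list (map (\<lambda>j. sum_list (map g (h j))) L)"
  by (induction L) auto

lemma cj:
  assumes "(B::int) > 0" "B dvd r" "r \<le> 0"
  shows "int (if r < 0 then nat (- r div B) else 0) * B = - r"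
proof (cases "r < 0")
  case True
  have "- r div B \<ge> 0" using True assms pos_imp_zdiv_nonneg_iff[of B "-r"] by simp
  then show ?thesis using True assms by simp
next
  case False then show ?thesis using assms by simp
qed

lemma round3_res:
  assumes B: "B > 0" and h: "\<forall>j\<in>{1..n}. B dvd fst s j \<and> fst s j \<le> 0"
    and hs: "(\<Sum>j\<in>{1..n}. fst s j) = - (int n * B)" and hp: "snd s = int n * B"
  shows "(\<forall>i\<in>{1..n}. fst (run_txs (round3 B n s) s) i = 0) \<and> snd (run_txs (round3 B n s) s) = 0
     \<and> length (round3 B n s) = n"
proof -
  define c where "c j = (if fst s j < 0 then nat (- fst s j div B) else 0)" for j
  have c: "int (c j) * B = - fst s j" if "j \<in> {1..n}" for j
    using cj[OF B, of "fst s j"] h that unfolding c_def by auto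
  define hh where "hh j = (if fst s j < 0 then map (\<lambda>k. (Piggy, Anon j k, B)) [0..<nat (- fst s j div B)] else [])" for j
  have r3: "round3 B n s = concat (map hh [1..<Suc n])" unfolding round3_def hh_def by simp
  have hhlen: "length (hh j) = c j" for j unfolding hh_def c_def by simp
  have d1: "sum_list (map (delta (Some i)) (hh j)) = (if j = i then int (c j) * B else 0)" for i j
    unfolding hh_def c_def by (simp add: delta_def sum_list_triv o_def)
  have d2: "sum_list (map (delta None) (hh j)) = - (int (c j) * B)" for j
    unfolding hh_def c_def by (simp add: delta_def sum_list_triv o_def)
  have F: "fst (run_txs (round3 B n s) s) i = 0" if i: "i \<in> {1..n}" for i
  proof -
    have "fst (run_txs (round3 B n s) s) i = fst s i + (\<Sum>j\<in>{1..n}. if j = i then int (c j) * B else 0)"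
      unfolding run_txs_def run_fst r3 sum_list_map_concat d1 sum_list_upt1 by simp
    also have "\<dots> = 0" using i c[OF i] by simp
    finally show ?thesis .
  qed
  have "snd (run_txs (round3 B n s) s) = snd s + (\<Sum>j\<in>{1..n}. - (int (c j) * B))"
    unfolding run_txs_def run_snd r3 sum_list_map_concat d2 sum_list_upt1 by simp
  also have "\<dots> = snd s + (\<Sum>j\<in>{1..n}. fst s j)" using c by (simp add: sum_negf)
  also have "\<dots> = 0" using hs hp by simp
  finally have S: "snd (run_txs (round3 B n s) s) = 0" .
  have "int (length (round3 B n s)) = (\<Sum>j\<in>{1..n}. int (c j))"
    unfolding r3 length_concat map_map o_def hhlen sum_list_upt1 by simp
  then have "int (length (round3 B n s)) * B = (\<Sum>j\<in>{1..n}. int (c j) * B)"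
    by (simp add: sum_distrib_right)
  also have "\<dots> = - (\<Sum>j\<in>{1..n}. fst s j)" using c by (simp add: sum_negf)
  also have "\<dots> = int n * B" using hs by simp
  finally have "int (length (round3 B n s)) = int n" using B by simp
  then have L: "length (round3 B n s) = n" by simp
  show ?thesis using F S L by blast
qed

theorem theorem2:
  fixes n :: nat and B :: int and pay :: "nat \<Rightarrow> nat \<Rightarrow> int" and p :: "nat \<Rightarrow> int"
  assumes "n \<ge> 2" and "B > 0"
    and "\<And>i j. i \<in> {1..n} \<Longrightarrow> j \<in> {1..n} \<Longrightarrow> i \<noteq> j \<Longrightarrow> pay i j \<ge> 0"
    and "\<And>j. j \<in> {1..n} \<Longrightarrow> (\<Sum>k\<in>{1..n} - {j}. pay k j) \<le> B"
    and "\<And>i. i \<in> {1..n} \<Longrightarrow> real_of_int (p i) = santa_balance n pay i"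
    and "t1 \<in> {1..B}"
  shows "let (s1, T1) = round1 B n t1 (p, 0);
             T2 = round2 B n;
             s2 = run_txs T2 s1;
             T3 = round3 B n s2;
             s3 = run_txs T3 s2
         in (\<forall>i\<in>{1..n}. fst s3 i = 0) \<and> snd s3 = 0
            \<and> length (T1 @ T2 @ T3) = 3 * n"
proof -
  note n = assms(1) and B = assms(2)
  have hp: "\<forall>i\<in>{1..n}. p i \<le> B"
  proof
    fix i assume i: "i \<in> {1..n}"
    have "real_of_int (p i) \<le> real_of_int B"
      using santa_le[OF n B assms(3) assms(4) i] assms(5)[OF i] by simp
    then show "p i \<le> B" by simp
  qed
  have "real_of_int (\<Sum>i\<in>{1..n}. p i) = (\<Sum>i\<in>{1..n}. santa_balance n pay i)"
    using assms(5) by simp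
  then have "real_of_int (\<Sum>i\<in>{1..n}. p i) = 0" using santa_sum[OF n, of pay] by (simp del: of_int_sum)
  then have hs: "(\<Sum>i\<in>{1..n}. p i) = 0" by (simp only: of_int_eq_0_iff)
  have t: "1 \<le> t1" "t1 \<le> B" using assms(6) by auto
  obtain s1 T1 where r1: "round1 B n t1 (p, 0) = (s1, T1)" by (cases "round1 B n t1 (p, 0)")
  have R1: "inv1 B n n s1" "length T1 = n" using round1_res[OF n B hp hs t] r1 by auto
  define q where "q = fst s1"
  have q1: "\<forall>i\<in>{2..n}. B dvd q i \<and> q i \<le> B" "q 1 \<le> 2 * B - 1"
    "(\<Sum>i\<in>{1..n}. q i) = 0" "snd s1 = 0"
    using R1(1) unfolding inv1_def q_def by auto
  have split: "(\<Sum>i\<in>{1..n}. q i) = q 1 + (\<Sum>i\<in>{2..n}. q i)"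
    using n sum.atLeast_Suc_atMost[of 1 n q] by (simp add: numeral_2_eq_2)
  have "B dvd (\<Sum>i\<in>{2..n}. q i)" using q1(1) by (intro dvd_sum) auto
  moreover have "q 1 = - (\<Sum>i\<in>{2..n}. q i)" using split q1(3) by linarith
  ultimately have "B dvd q 1" by simp
  then have "q 1 \<le> B" using dvd_le[OF B, of "q 1"] q1(2) by simp
  have hq: "\<forall>i\<in>{1..n}. B dvd q i \<and> q i \<le> B"
  proof
    fix i assume i: "i \<in> {1..n}"
    show "B dvd q i \<and> q i \<le> B"
    proof (cases "i = 1")
      case True then show ?thesis using \<open>B dvd q 1\<close> \<open>q 1 \<le> B\<close> by simp
    next
      case False then have "i \<in> {2..n}" using i by auto
      then show ?thesis using q1(1) by blast
    qed
  qed
  define s2 where "s2 = run_txs (round2 B n) s1"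
  have d2: "sum_list (map (delta (Some i)) (round2 B n)) = (\<Sum>j\<in>{1..n}. if j = i then - B else 0)" for i
    unfolding round2_def map_map o_def sum_list_upt1 by (intro sum.cong) (auto simp: delta_def)
  have s2f: "fst s2 i = q i - B" if "i \<in> {1..n}" for i
    unfolding s2_def run_txs_def run_fst d2 q_def using that by simp
  have "snd s2 = snd s1 + (\<Sum>j\<in>{1..n}. B)"
    unfolding s2_def run_txs_def run_snd round2_def map_map o_def sum_list_upt1 by (simp add: delta_def)
  then have s2s: "snd s2 = int n * B" using q1(4) by simp
  have h2: "\<forall>j\<in>{1..n}. B dvd fst s2 j \<and> fst s2 j \<le> 0" using hq s2f by auto
  have "(\<Sum>j\<in>{1..n}. fst s2 j) = (\<Sum>j\<in>{1..n}. q j - B)" using s2f by simp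
  also have "\<dots> = - (int n * B)" using q1(3) by (simp add: sum_subtractf)
  finally have hs2: "(\<Sum>j\<in>{1..n}. fst s2 j) = - (int n * B)" .
  note R3 = round3_res[OF B h2 hs2 s2s]
  have l2: "length (round2 B n) = n" unfolding round2_def by simp
  show ?thesis unfolding Let_def r1 prod.case s2_def[symmetric] using R3 R1(2) l2 by simp
qed

end
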